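(* Let $0<r\le 1/2$, let $H$ be an $r$-skew LKS-graph on $n$ vertices with parameters $(k,\eta,\varepsilon,d)$ (with $k,\eta,d$ arbitrary), and let $\mathbf H$ be its cluster graph. Then: (1) If $C$ is an $L$-cluster and $D$ is an $S$-cluster of $\mathbf H$, then $|C|\le n/|V(\mathbf H)|$ and $|D|\le \frac{n}{r|V(\mathbf H)|}$. (2) If $v\in V(H)$ is an ultratypical vertex, $C$ is the cluster of $\mathbf H$ containing $v$, and $\mathcal S\subseteq V(\mathbf H)$ is any set of clusters, then $\deg(v,\bigcup\mathcal S)\ge \overline{\deg}(C,\mathcal S)-2\sqrt{\varepsilon}\,n/r$.
   Context: For disjoint vertex sets $X,Y$, $d(X,Y)=|E(X,Y)|/(|X||Y|)$ is the density, and $(X,Y)$ is $\varepsilon$-regular if $|d(X',Y')-d(X,Y)|\le\varepsilon$ for all $X'\subseteq X$, $Y'\subseteq Y$ with $|X'|\ge\varepsilon|X|$, $|Y'|\ge\varepsilon|Y|$. For $r\le 1/2$, a graph $H$ is an $r$-skew LKS-graph with parameters $(k,\eta,\varepsilon,d)$ if there is a partition $\{L_1,\dots,L_{m_L},S_1,\dots,S_{m_S}\}$ of $V(H)$ such that: (i) $m_L\ge(1+\eta)m_S$; (ii) all $L_i$ have the same size and all $S_j$ have the same size; (iii) $r|S_j|=(1-r)|L_i|$ for all $i,j$; (iv) each pair $(L_i,L_j)$ ($i\ne j$) and each pair $(L_i,S_j)$ is $\varepsilon$-regular of density either $0$ or at least $d$; (v) there are no edges inside any of the sets and no edges between $S_i$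 and $S_j$ for $i\ne j$; (vi) the average degree of the vertices of each $L_i$ is at least $(1+\eta)k$. The sets $L_i$ are $L$-clusters, the sets $S_j$ are $S$-clusters. The cluster graph $\mathbf H$ has vertex set $\{L_1,\dots,L_{m_L},S_1,\dots,S_{m_S}\}$ (the clusters), with an edge between two clusters whenever the corresponding pair has positive density in $H$. For $v\in V(H)$ and $Z\subseteq V(H)$, $\deg(v,Z)$ is the number of neighbours of $v$ in $Z$. For a set $\mathcal S$ of clusters, $\bigcup\mathcal S$ is the union of its clusters, and for a cluster $A$, $\overline{\deg}(A,\mathcal S)$ is the average of $\deg(a,\bigcup\mathcal S)$ over $a\in A$. A vertex $x$ of a cluster $X$ is typical with respect to a cluster $Y$ if $\deg(x,Y)\ge (d(X,Y)-\varepsilon)|Y|$; $x$ is ultratypical if it is typical with respect to all but at most $\sqrt{\varepsilon}\,|V(\mathbf H)|$ clusters $Y\ne X$. *)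

theory Defs
  imports Complex_Main
begin

definition simple_graph :: "'a set \<Rightarrow> ('a \<Rightarrow> 'a \<Rightarrow> bool) \<Rightarrow> bool" where
  "simple_graph V E \<longleftrightarrow> finite V \<and> (\<forall>x y. E x y \<longrightarrow> x \<in> V \<and> y \<in> V)
     \<and> (\<forall>x y. E x y \<longrightarrow> E y x) \<and> (\<forall>x. \<not> E x x)"

definition edge_count :: "('a \<Rightarrow> 'a \<Rightarrow> bool) \<Rightarrow> 'a set \<Rightarrow> 'a set \<Rightarrow> nat" where
  "edge_count E X Y = card {(x, y). x \<in> X \<and> y \<in> Y \<and> E x y}"

definition density :: "('a \<Rightarrow> 'a \<Rightarrow> bool) \<Rightarrow> 'a set \<Rightarrow> 'a set \<Rightarrow> real" where
  "density E X Y = real (edge_count E X Y) / (real (card X) * real (card Y))"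

definition eps_regular :: "('a \<Rightarrow> 'a \<Rightarrow> bool) \<Rightarrow> real \<Rightarrow> 'a set \<Rightarrow> 'a set \<Rightarrow> bool" where
  "eps_regular E \<epsilon> X Y \<longleftrightarrow>
     (\<forall>X' Y'. X' \<subseteq> X \<longrightarrow> Y' \<subseteq> Y \<longrightarrow> real (card X') \<ge> \<epsilon> * real (card X)
        \<longrightarrow> real (card Y') \<ge> \<epsilon> * real (card Y)
        \<longrightarrow> \<bar>density E X' Y' - density E X Y\<bar> \<le> \<epsilon>)"

definition deg_in :: "('a \<Rightarrow> 'a \<Rightarrow> bool) \<Rightarrow> 'a \<Rightarrow> 'a set \<Rightarrow> nat" where
  "deg_in E v Z = card {u \<in> Z. E v u}"

definition avg_deg_in :: "('a \<Rightarrow> 'a \<Rightarrow> bool) \<Rightarrow> 'a set \<Rightarrow> 'a set \<Rightarrow> real" where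
  "avg_deg_in E A Z = (\<Sum>a\<in>A. real (deg_in E a Z)) / real (card A)"

text \<open>Vertex set of the cluster graph: the set of all clusters.\<close>
definition clusters :: "(nat \<Rightarrow> 'a set) \<Rightarrow> nat \<Rightarrow> (nat \<Rightarrow> 'a set) \<Rightarrow> nat \<Rightarrow> 'a set set" where
  "clusters L mL S mS = L ` {..<mL} \<union> S ` {..<mS}"

definition density_ok :: "('a \<Rightarrow> 'a \<Rightarrow> bool) \<Rightarrow> real \<Rightarrow> real \<Rightarrow> 'a set \<Rightarrow> 'a set \<Rightarrow> bool" where
  "density_ok E \<epsilon> d X Y \<longleftrightarrow> eps_regular E \<epsilon> X Y \<and> (density E X Y = 0 \<or> density E X Y \<ge> d)"

definition no_edges :: "('a \<Rightarrow> 'a \<Rightarrow> bool) \<Rightarrow> 'a set \<Rightarrow> 'a set \<Rightarrow> bool" where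
  "no_edges E X Y \<longleftrightarrow> (\<forall>x\<in>X. \<forall>y\<in>Y. \<not> E x y)"

text \<open>H=(V,E) is an r-skew LKS-graph with parameters (k,eta,eps,d), witnessed by the partition
  into L-clusters L 0,...,L (mL-1) and S-clusters S 0,...,S (mS-1).\<close>
definition skew_LKS ::
  "real \<Rightarrow> 'a set \<Rightarrow> ('a \<Rightarrow> 'a \<Rightarrow> bool) \<Rightarrow> real \<Rightarrow> real \<Rightarrow> real \<Rightarrow> real
     \<Rightarrow> (nat \<Rightarrow> 'a set) \<Rightarrow> nat \<Rightarrow> (nat \<Rightarrow> 'a set) \<Rightarrow> nat \<Rightarrow> bool" where
  "skew_LKS r V E k \<eta> \<epsilon> d L mL S mS \<longleftrightarrow>
     \<comment> \<open>partition of V\<close>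
     (\<forall>i<mL. L i \<noteq> {}) \<and> (\<forall>j<mS. S j \<noteq> {})
     \<and> (\<forall>i<mL. \<forall>i'<mL. i \<noteq> i' \<longrightarrow> L i \<inter> L i' = {})
     \<and> (\<forall>j<mS. \<forall>j'<mS. j \<noteq> j' \<longrightarrow> S j \<inter> S j' = {})
     \<and> (\<forall>i<mL. \<forall>j<mS. L i \<inter> S j = {})
     \<and> (\<Union>i<mL. L i) \<union> (\<Union>j<mS. S j) = V
     \<comment> \<open>(i)\<close>
     \<and> real mL \<ge> (1 + \<eta>) * real mS
     \<comment> \<open>(ii)\<close>
     \<and> (\<forall>i<mL. \<forall>i'<mL. card (L i) = card (L i'))
     \<and> (\<forall>j<mS. \<forall>j'<mS. card (S j) = card (S j'))
     \<comment> \<open>(iii)\<close>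
     \<and> (\<forall>i<mL. \<forall>j<mS. r * real (card (S j)) = (1 - r) * real (card (L i)))
     \<comment> \<open>(iv)\<close>
     \<and> (\<forall>i<mL. \<forall>i'<mL. i \<noteq> i' \<longrightarrow> density_ok E \<epsilon> d (L i) (L i'))
     \<and> (\<forall>i<mL. \<forall>j<mS. density_ok E \<epsilon> d (L i) (S j))
     \<comment> \<open>(v)\<close>
     \<and> (\<forall>i<mL. no_edges E (L i) (L i)) \<and> (\<forall>j<mS. no_edges E (S j) (S j))
     \<and> (\<forall>j<mS. \<forall>j'<mS. j \<noteq> j' \<longrightarrow> no_edges E (S j) (S j'))
     \<comment> \<open>(vi)\<close>
     \<and> (\<forall>i<mL. avg_deg_in E (L i) V \<ge> (1 + \<eta>) * k)"

definition typical :: "('a \<Rightarrow> 'a \<Rightarrow> bool) \<Rightarrow> real \<Rightarrow> 'a set \<Rightarrow> 'a set \<Rightarrow> 'a \<Rightarrow> bool" where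
  "typical E \<epsilon> X Y x \<longleftrightarrow> real (deg_in E x Y) \<ge> (density E X Y - \<epsilon>) * real (card Y)"

definition ultratypical :: "('a \<Rightarrow> 'a \<Rightarrow> bool) \<Rightarrow> real \<Rightarrow> 'a set set \<Rightarrow> 'a set \<Rightarrow> 'a \<Rightarrow> bool" where
  "ultratypical E \<epsilon> Cl X x \<longleftrightarrow>
     real (card {Y \<in> Cl. Y \<noteq> X \<and> \<not> typical E \<epsilon> X Y x}) \<le> sqrt \<epsilon> * real (card Cl)"

end

theory Submission
  imports Defs
begin

lemma deg_union:
  assumes fin: "finite Cl" and sub: "SS \<subseteq> Cl" and finY: "\<forall>Y\<in>Cl. finite Y"
    and disj: "\<forall>Y\<in>Cl. \<forall>Z\<in>Cl. Y \<noteq> Z \<longrightarrow> Y \<inter> Z = {}"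
  shows "deg_in E v (\<Union>SS) = (\<Sum>Y\<in>SS. deg_in E v Y)"
proof -
  have "{u \<in> \<Union>SS. E v u} = (\<Union>Y\<in>SS. {u \<in> Y. E v u})" by blast
  moreover have "finite SS" using fin sub finite_subset by blast
  ultimately have "card {u \<in> \<Union>SS. E v u} = (\<Sum>Y\<in>SS. card {u \<in> Y. E v u})"
    by (simp only:) (rule card_UN_disjoint,
      simp, use sub finY in \<open>simp add: subset_iff\<close>, use sub disj in \<open>simp add: subset_iff disjoint_iff; metis\<close>)
  thus ?thesis unfolding deg_in_def .
qed

lemma avg_union:
  assumes fin: "finite Cl" and sub: "SS \<subseteq> Cl" and finY: "\<forall>Y\<in>Cl. finite Y"
    and disj: "\<forall>Y\<in>Cl. \<forall>Z\<in>Cl. Y \<noteq> Z \<longrightarrow> Y \<inter> Z = {}"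
  shows "avg_deg_in E C (\<Union>SS) = (\<Sum>Y\<in>SS. avg_deg_in E C Y)"
proof -
  have "(\<Sum>a\<in>C. real (deg_in E a (\<Union>SS))) = (\<Sum>a\<in>C. \<Sum>Y\<in>SS. real (deg_in E a Y))"
    using deg_union[OF assms] by simp
  also have "\<dots> = (\<Sum>Y\<in>SS. \<Sum>a\<in>C. real (deg_in E a Y))" by (rule sum.swap)
  finally show ?thesis unfolding avg_deg_in_def by (simp add: sum_divide_distrib)
qed

lemma sum_deg_edge:
  assumes "finite C" "finite Y"
  shows "(\<Sum>a\<in>C. real (deg_in E a Y)) = real (edge_count E C Y)"
proof -
  have "{(x, y). x \<in> C \<and> y \<in> Y \<and> E x y} = Sigma C (\<lambda>x. {y\<in>Y. E x y})" by auto
  hence "edge_count E C Y = (\<Sum>a\<in>C. deg_in E a Y)"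
    unfolding edge_count_def deg_in_def using assms by (simp add: card_SigmaI)
  thus ?thesis by simp
qed

lemma avg_le_card:
  assumes "finite C" "C \<noteq> {}" "finite Y"
  shows "avg_deg_in E C Y \<le> real (card Y)"
proof -
  have "(\<Sum>a\<in>C. real (deg_in E a Y)) \<le> (\<Sum>a\<in>C. real (card Y))"
    by (rule sum_mono) (simp add: deg_in_def assms card_mono)
  hence "(\<Sum>a\<in>C. real (deg_in E a Y)) \<le> real (card C) * real (card Y)" by simp
  moreover have "card C > 0" using assms by auto
  ultimately show ?thesis unfolding avg_deg_in_def by (simp add: divide_le_eq mult.commute)
qed

lemma avg_typical:
  assumes "finite C" "C \<noteq> {}" "finite Y" "Y \<noteq> {}" "typical E \<epsilon> C Y v"
  shows "avg_deg_in E C Y - real (deg_in E v Y) \<le> \<epsilon> * real (card Y)"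
proof -
  have cC: "card C > 0" and cY: "card Y > 0" using assms by auto
  have "avg_deg_in E C Y = density E C Y * real (card Y)"
    unfolding avg_deg_in_def density_def sum_deg_edge[OF assms(1,3)] using cC cY by simp
  thus ?thesis using assms(5) unfolding typical_def by (simp add: algebra_simps)
qed

lemma min_sqrt: "0 < (e::real) \<Longrightarrow> min e 1 \<le> sqrt e"
proof (cases "e \<le> 1")
  case True
  assume "0 < e"
  have "e * e \<le> e" using True \<open>0<e\<close> by (simp add: mult_le_cancel_left1)
  hence "e \<le> sqrt e" using \<open>0<e\<close> by (simp add: real_le_rsqrt power2_eq_square)
  thus ?thesis by simp
next
  case False
  thus ?thesis by simp
qed


theorem proposition3p2:
  fixes V :: "'a set" and E :: "'a \<Rightarrow> 'a \<Rightarrow> bool"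
    and r k \<eta> \<epsilon> d :: real
    and L S :: "nat \<Rightarrow> 'a set" and mL mS :: nat
  assumes "simple_graph V E"
    and "0 < r" and "r \<le> 1/2" and "0 < \<epsilon>"
    and "skew_LKS r V E k \<eta> \<epsilon> d L mL S mS"
  shows "(\<forall>i<mL. real (card (L i)) \<le> real (card V) / real (card (clusters L mL S mS)))
       \<and> (\<forall>j<mS. real (card (S j)) \<le> real (card V) / (r * real (card (clusters L mL S mS))))
       \<and> (\<forall>v C \<S>. v \<in> V \<longrightarrow> C \<in> clusters L mL S mS \<longrightarrow> v \<in> C
            \<longrightarrow> ultratypical E \<epsilon> (clusters L mL S mS) C v
            \<longrightarrow> \<S> \<subseteq> clusters L mL S mS
            \<longrightarrow> real (deg_in E v (\<Union>\<S>))
                  \<ge> avg_deg_in E C (\<Union>\<S>) - 2 * sqrt \<epsilon> * real (card V) / r)"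
proof -
  note sk = assms(5)[unfolded skew_LKS_def]
  have "\<forall>i<mL. L i \<noteq> {}" using sk by (elim conjE) assumption
  hence Lne: "\<And>i. i<mL \<Longrightarrow> L i \<noteq> {}" by blast
  have "\<forall>j<mS. S j \<noteq> {}" using sk by (elim conjE) assumption
  hence Sne: "\<And>j. j<mS \<Longrightarrow> S j \<noteq> {}" by blast
  have "\<forall>i<mL. \<forall>i'<mL. i \<noteq> i' \<longrightarrow> L i \<inter> L i' = {}" using sk by (elim conjE) assumption
  hence LL: "\<And>i i'. i<mL \<Longrightarrow> i'<mL \<Longrightarrow> i \<noteq> i' \<Longrightarrow> L i \<inter> L i' = {}" by blast
  have "\<forall>j<mS. \<forall>j'<mS. j \<noteq> j' \<longrightarrow> S j \<inter> S j' = {}" using sk by (elim conjE) assumption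
  hence SSd: "\<And>j j'. j<mS \<Longrightarrow> j'<mS \<Longrightarrow> j \<noteq> j' \<Longrightarrow> S j \<inter> S j' = {}" by blast
  have "\<forall>i<mL. \<forall>j<mS. L i \<inter> S j = {}" using sk by (elim conjE) assumption
  hence LS: "\<And>i j. i<mL \<Longrightarrow> j<mS \<Longrightarrow> L i \<inter> S j = {}" by blast
  have UV: "(\<Union>i<mL. L i) \<union> (\<Union>j<mS. S j) = V" using sk by (elim conjE) assumption
  have "\<forall>i<mL. \<forall>i'<mL. card (L i) = card (L i')" using sk by (elim conjE) assumption
  hence cLL: "\<And>i i'. i<mL \<Longrightarrow> i'<mL \<Longrightarrow> card (L i) = card (L i')" by blast
  have "\<forall>j<mS. \<forall>j'<mS. card (S j) = card (S j')" using sk by (elim conjE) assumption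
  hence cSS: "\<And>j j'. j<mS \<Longrightarrow> j'<mS \<Longrightarrow> card (S j) = card (S j')" by blast
  have "\<forall>i<mL. \<forall>j<mS. r * real (card (S j)) = (1 - r) * real (card (L i))" using sk by (elim conjE) assumption
  hence rel: "\<And>i j. i<mL \<Longrightarrow> j<mS \<Longrightarrow> r * real (card (S j)) = (1 - r) * real (card (L i))" by blast
  have "\<forall>i<mL. no_edges E (L i) (L i)" using sk by (elim conjE) assumption
  hence neL: "\<And>i. i<mL \<Longrightarrow> no_edges E (L i) (L i)" by blast
  have "\<forall>j<mS. no_edges E (S j) (S j)" using sk by (elim conjE) assumption
  hence neS: "\<And>j. j<mS \<Longrightarrow> no_edges E (S j) (S j)" by blast
  have finV: "finite V" using assms(1) unfolding simple_graph_def by blast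
  define Cl where "Cl = clusters L mL S mS"
  define N where "N = card Cl"
  define n where "n = card V"
  have Cl_def': "Cl = L ` {..<mL} \<union> S ` {..<mS}" unfolding Cl_def clusters_def ..
  have finCl: "finite Cl" unfolding Cl_def' by simp
  have subV: "\<And>Y. Y \<in> Cl \<Longrightarrow> Y \<subseteq> V" unfolding Cl_def' using UV by blast
  have finY: "\<forall>Y\<in>Cl. finite Y" using subV finV finite_subset by blast
  have neY: "\<And>Y. Y \<in> Cl \<Longrightarrow> Y \<noteq> {}" unfolding Cl_def' using Lne Sne by blast
  have noe: "\<And>Y. Y \<in> Cl \<Longrightarrow> no_edges E Y Y" unfolding Cl_def' using neL neS by blast
  have disj: "\<forall>Y\<in>Cl. \<forall>Z\<in>Cl. Y \<noteq> Z \<longrightarrow> Y \<inter> Z = {}"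
  proof (intro ballI impI)
    fix Y Z assume Y: "Y \<in> Cl" and Z: "Z \<in> Cl" and YZ: "Y \<noteq> Z"
    from Z consider (c) i' where "i'<mL" "Z = L i'" | (d) j' where "j'<mS" "Z = S j'"
      unfolding Cl_def' by blast
    note cz = this
    from Y consider (a) i where "i<mL" "Y = L i" | (b) j where "j<mS" "Y = S j"
      unfolding Cl_def' by blast
    then show "Y \<inter> Z = {}"
    proof cases
      case a
      from cz show ?thesis
      proof cases
        case c thus ?thesis using a LL YZ by blast
      next
        case d thus ?thesis using a LS by blast
      qed
    next
      case b
      from cz show ?thesis
      proof cases
        case c thus ?thesis using b LS by (simp add: Int_commute)
      next
        case d thus ?thesis using b SSd YZ by blast
      qed
    qed
  qed
  have UCl: "\<Union>Cl = V" unfolding Cl_def' using UV by blast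
  have injL: "inj_on L {..<mL}"
    unfolding inj_on_def using LL Lne by (metis Int_absorb lessThan_iff)
  have injS: "inj_on S {..<mS}"
    unfolding inj_on_def using SSd Sne by (metis Int_absorb lessThan_iff)
  have dLS: "L ` {..<mL} \<inter> S ` {..<mS} = {}"
    using LS Lne by (auto, metis Int_absorb)
  have N_eq: "N = mL + mS"
    unfolding N_def Cl_def' using card_Un_disjoint[OF _ _ dLS] card_image[OF injL] card_image[OF injS]
    by simp
  have n_eq: "n = sum card Cl"
    unfolding n_def UCl[symmetric]
    by (rule card_Union_disjoint) (use disj finY in \<open>auto simp: pairwise_def disjnt_def\<close>)
  have n_eq2: "real n = (\<Sum>i<mL. real (card (L i))) + (\<Sum>j<mS. real (card (S j)))"
  proof -
    have "sum card Cl = sum card (L ` {..<mL}) + sum card (S ` {..<mS})"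
      unfolding Cl_def' by (rule sum.union_disjoint) (use dLS in auto)
    also have "\<dots> = (\<Sum>i<mL. card (L i)) + (\<Sum>j<mS. card (S j))"
      using sum.reindex[OF injL, of card] sum.reindex[OF injS, of card] by simp
    finally show ?thesis using n_eq by simp
  qed
  have r1: "r \<le> 1" using assms(3) by simp
  have P1: "\<forall>i<mL. real (card (L i)) \<le> real n / real N"
  proof (intro allI impI)
    fix i assume i: "i < mL"
    define l where "l = real (card (L i))"
    have a: "(\<Sum>i'<mL. real (card (L i'))) = real mL * l"
      using cLL[OF _ i] unfolding l_def by simp
    have "\<And>j. j<mS \<Longrightarrow> l \<le> real (card (S j))"
    proof -
      fix j assume j: "j<mS"
      have "r * real (card (S j)) = (1 - r) * l" using rel[OF i j] l_def by simp
      moreover have "r * l \<le> (1-r) * l" using assms(3) l_def by (intro mult_right_mono) auto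
      ultimately have "r * l \<le> r * real (card (S j))" by simp
      thus "l \<le> real (card (S j))" using assms(2) by simp
    qed
    hence "(\<Sum>j<mS. l) \<le> (\<Sum>j<mS. real (card (S j)))" by (intro sum_mono) auto
    hence "real N * l \<le> real n" using n_eq2 a N_eq by (simp add: algebra_simps)
    moreover have "real N > 0" using i N_eq by simp
    ultimately show "real (card (L i)) \<le> real n / real N" unfolding l_def
      by (simp add: le_divide_eq mult.commute)
  qed
  have P2: "\<forall>j<mS. real (card (S j)) \<le> real n / (r * real N)"
  proof (intro allI impI)
    fix j assume j: "j < mS"
    define s where "s = real (card (S j))"
    have a: "(\<Sum>j'<mS. real (card (S j'))) = real mS * s"
      using cSS[OF _ j] unfolding s_def by simp
    have "\<And>i. i<mL \<Longrightarrow> r * s \<le> real (card (L i))"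
    proof -
      fix i assume i: "i<mL"
      have "r * s = (1 - r) * real (card (L i))" using rel[OF i j] s_def by simp
      moreover have "(1 - r) * real (card (L i)) \<le> real (card (L i))" using assms(2)
        by (simp add: algebra_simps)
      ultimately show "r * s \<le> real (card (L i))" by simp
    qed
    hence b: "(\<Sum>i<mL. r * s) \<le> (\<Sum>i<mL. real (card (L i)))" by (intro sum_mono) auto
    have "r * s \<le> 1 * s" using r1 s_def by (intro mult_right_mono) auto
    hence "r * s \<le> s" by simp
    hence "real mS * (r * s) \<le> real mS * s" by (simp add: mult_left_mono)
    hence "real N * (r * s) \<le> real n" using n_eq2 a b N_eq by (simp add: algebra_simps)
    moreover have "r * real N > 0" using j N_eq assms(2) by simp
    ultimately show "real (card (S j)) \<le> real n / (r * real N)" unfolding s_def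
      by (simp add: le_divide_eq algebra_simps)
  qed
  have Nr: "real n / real N \<le> real n / (r * real N)"
  proof (cases "N = 0")
    case False
    thus ?thesis using assms(2) r1 by (intro divide_left_mono) (auto intro: mult_pos_pos)
  qed simp
  have maxY: "\<And>Y. Y \<in> Cl \<Longrightarrow> real (card Y) \<le> real n / (r * real N)"
    unfolding Cl_def' using P1 P2 Nr by fastforce
  have P3: "\<forall>v C SS. v \<in> V \<longrightarrow> C \<in> Cl \<longrightarrow> v \<in> C \<longrightarrow> ultratypical E \<epsilon> Cl C v
            \<longrightarrow> SS \<subseteq> Cl \<longrightarrow> real (deg_in E v (\<Union>SS))
                  \<ge> avg_deg_in E C (\<Union>SS) - 2 * sqrt \<epsilon> * real n / r"
  proof (intro allI impI)
    fix v C SS assume v: "v \<in> V" and C: "C \<in> Cl" and vC: "v \<in> C"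
      and ut: "ultratypical E \<epsilon> Cl C v" and SS: "SS \<subseteq> Cl"
    define B where "B = {Y \<in> Cl. Y \<noteq> C \<and> \<not> typical E \<epsilon> C Y v}"
    have cB: "real (card B) \<le> sqrt \<epsilon> * real N"
      using ut unfolding ultratypical_def B_def N_def .
    have finB: "finite B" using finCl B_def by simp
    have BCl: "B \<subseteq> Cl" unfolding B_def by blast
    define f where "f Y = avg_deg_in E C Y - real (deg_in E v Y)" for Y
    define g where "g Y = sqrt \<epsilon> * real (card Y) + (if Y \<in> B then real (card Y) else 0)" for Y
    have finC: "finite C" "C \<noteq> {}" using C finY neY by auto
    have fg: "\<And>Y. Y \<in> Cl \<Longrightarrow> f Y \<le> g Y"
    proof -
      fix Y assume Y: "Y \<in> Cl"
      have f1: "f Y \<le> real (card Y)" unfolding f_def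
        using avg_le_card[OF finC, of Y E] Y finY by simp
      have sq0: "sqrt \<epsilon> * real (card Y) \<ge> 0" using assms(4) by simp
      show "f Y \<le> g Y"
      proof (cases "Y \<in> B")
        case True
        thus ?thesis using f1 sq0 unfolding g_def by simp
      next
        case False
        have "f Y \<le> sqrt \<epsilon> * real (card Y)"
        proof (cases "Y = C")
          case True
          have "\<And>a. a \<in> C \<Longrightarrow> deg_in E a C = 0"
          proof -
            fix a assume "a \<in> C"
            hence "{u \<in> C. E a u} = {}" using noe[OF C] unfolding no_edges_def by blast
            thus "deg_in E a C = 0" unfolding deg_in_def by (simp only: card.empty)
          qed
          hence "avg_deg_in E C Y = 0" unfolding avg_deg_in_def True by simp
          thus ?thesis unfolding f_def using sq0 by simp
        next
          case False
          hence ty: "typical E \<epsilon> C Y v" using \<open>Y \<notin> B\<close> Y unfolding B_def by blast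
          have f2: "f Y \<le> \<epsilon> * real (card Y)" unfolding f_def
            using avg_typical[OF finC _ _ ty] Y finY neY by simp
          have "f Y \<le> min \<epsilon> 1 * real (card Y)" using f1 f2 by (simp add: min_def)
          also have "\<dots> \<le> sqrt \<epsilon> * real (card Y)"
            using min_sqrt[OF assms(4)] by (intro mult_right_mono) auto
          finally show ?thesis .
        qed
        thus ?thesis using False unfolding g_def by simp
      qed
    qed
    have finSS: "finite SS" using SS finCl finite_subset by blast
    have "(\<Sum>Y\<in>SS. f Y) \<le> (\<Sum>Y\<in>SS. g Y)" using fg SS by (intro sum_mono) auto
    also have "\<dots> \<le> (\<Sum>Y\<in>Cl. g Y)"
    proof (rule sum_mono2[OF finCl SS])
      fix b assume "b \<in> Cl - SS"
      have "0 \<le> sqrt \<epsilon>" using assms(4) by simp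
      hence "0 \<le> sqrt \<epsilon> * real (card b)" by simp
      thus "0 \<le> g b" unfolding g_def by simp
    qed
    also have "\<dots> = sqrt \<epsilon> * real n + (\<Sum>Y\<in>B. real (card Y))"
    proof -
      have "(\<Sum>Y\<in>Cl. g Y) = (\<Sum>Y\<in>Cl. sqrt \<epsilon> * real (card Y)) + (\<Sum>Y\<in>Cl. if Y \<in> B then real (card Y) else 0)"
        unfolding g_def by (simp add: sum.distrib)
      also have "(\<Sum>Y\<in>Cl. if Y \<in> B then real (card Y) else 0) = (\<Sum>Y\<in>B. real (card Y))"
        using finCl BCl by (simp add: sum.If_cases Int_absorb1)
      also have "(\<Sum>Y\<in>Cl. sqrt \<epsilon> * real (card Y)) = sqrt \<epsilon> * real n"
        using n_eq by (simp add: sum_distrib_left[symmetric])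
      finally show ?thesis .
    qed
    also have "(\<Sum>Y\<in>B. real (card Y)) \<le> (\<Sum>Y\<in>B. real n / (r * real N))"
      using maxY BCl by (intro sum_mono) auto
    also have "\<dots> = real (card B) * (real n / (r * real N))" by simp
    also have "\<dots> \<le> sqrt \<epsilon> * real N * (real n / (r * real N))"
      using cB assms(2) by (intro mult_right_mono) auto
    also have "\<dots> \<le> sqrt \<epsilon> * real n / r"
    proof (cases "N = 0")
      case False thus ?thesis by simp
    next
      case True thus ?thesis using assms(2) assms(4) by simp
    qed
    finally have sfB: "(\<Sum>Y\<in>SS. f Y) \<le> sqrt \<epsilon> * real n + sqrt \<epsilon> * real n / r" by simp
    have "sqrt \<epsilon> * real n \<le> sqrt \<epsilon> * real n / r"
    proof -
      have q: "0 \<le> sqrt \<epsilon> * real n" using assms(4) by simp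
      have "sqrt \<epsilon> * real n * r \<le> sqrt \<epsilon> * real n * 1"
        using r1 q by (intro mult_left_mono) auto
      thus ?thesis using assms(2) by (simp add: le_divide_eq)
    qed
    hence sfB2: "(\<Sum>Y\<in>SS. f Y) \<le> 2 * sqrt \<epsilon> * real n / r" using sfB by simp
    have "(\<Sum>Y\<in>SS. f Y) = avg_deg_in E C (\<Union>SS) - real (deg_in E v (\<Union>SS))"
      unfolding f_def avg_union[OF finCl SS finY disj] deg_union[OF finCl SS finY disj]
      by (simp add: sum_subtractf)
    thus "real (deg_in E v (\<Union>SS)) \<ge> avg_deg_in E C (\<Union>SS) - 2 * sqrt \<epsilon> * real n / r"
      using sfB2 by simp
  qed
  show ?thesis using P1 P2 P3 unfolding Cl_def N_def n_def by blast
qed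

end
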